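(* Let $R$ be a Noetherian ring, let $I$ be a proper ideal of $R$, and let $n$ be an integer with $n\geq \operatorname{ara}(I)$. If every $(n+1)$-generated ideal $J\subseteq I$ with $\sqrt{J}=\sqrt{I}$ has an $n$-generated reduction, then $I$ has an $n$-generated reduction.
   Context: The arithmetic rank $\operatorname{ara}(I)$ of a proper ideal $I$ of a Noetherian ring $R$ is the least number $n$ such that $\sqrt{I}=\sqrt{(x_1,\ldots,x_n)R}$ for some $x_1,\ldots,x_n\in I$. A reduction of an ideal $I$ is an ideal $J\subseteq I$ such that $I^{m+1}=JI^m$ for some $m>0$; it is $n$-generated if it can be generated by $n$ elements. *)

theory Defs
  imports "HOL-Algebra.Ideal_Product" "HOL-Algebra.Ring_Divisibility"
begin

definition ideal_radical :: "('a, 'b) ring_scheme \<Rightarrow> 'a set \<Rightarrow> 'a set" where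
  "ideal_radical R I = {x \<in> carrier R. \<exists>k::nat. x [^]\<^bsub>R\<^esub> k \<in> I}"

fun ideal_pow :: "('a, 'b) ring_scheme \<Rightarrow> 'a set \<Rightarrow> nat \<Rightarrow> 'a set" where
  "ideal_pow R I 0 = carrier R"
| "ideal_pow R I (Suc m) = ideal_prod R I (ideal_pow R I m)"

definition n_generated :: "('a, 'b) ring_scheme \<Rightarrow> nat \<Rightarrow> 'a set \<Rightarrow> bool" where
  "n_generated R n J \<longleftrightarrow>
     (\<exists>xs. length xs = n \<and> set xs \<subseteq> carrier R \<and> J = Idl\<^bsub>R\<^esub> (set xs))"

definition ara :: "('a, 'b) ring_scheme \<Rightarrow> 'a set \<Rightarrow> nat" where
  "ara R I = (LEAST n. \<exists>xs. length xs = n \<and> set xs \<subseteq> I \<and>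
                 ideal_radical R (Idl\<^bsub>R\<^esub> (set xs)) = ideal_radical R I)"

definition is_reduction :: "('a, 'b) ring_scheme \<Rightarrow> 'a set \<Rightarrow> 'a set \<Rightarrow> bool" where
  "is_reduction R J I \<longleftrightarrow> ideal J R \<and> J \<subseteq> I \<and>
     (\<exists>m>0. ideal_pow R I (Suc m) = ideal_prod R J (ideal_pow R I m))"

end

theory Submission imports Defs begin

lemma ideal_prod_mono:
  assumes "A \<subseteq> A'" "B \<subseteq> B'"
  shows "ideal_prod R A B \<subseteq> ideal_prod R A' B'"
proof
  fix x assume "x \<in> ideal_prod R A B"
  then show "x \<in> ideal_prod R A' B'"
    by (induct x rule: ideal_prod.induct) (use assms in \<open>auto intro: ideal_prod.intros\<close>)
qed

lemma rad_mono: "A \<subseteq> B \<Longrightarrow> ideal_radical R A \<subseteq> ideal_radical R B"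
  unfolding ideal_radical_def by blast

context cring
begin

lemma set_add_sub:
  assumes "ideal Z R" "X \<subseteq> Z" "Y \<subseteq> Z"
  shows "set_add R X Y \<subseteq> Z"
proof
  fix z assume "z \<in> set_add R X Y"
  then obtain x y where xy: "x \<in> X" "y \<in> Y" "z = x \<oplus> y" unfolding set_add_def' by blast
  have "x \<in> Z" "y \<in> Z" using xy assms by blast+
  then show "z \<in> Z" using xy(3) additive_subgroup.a_closed[OF ideal.axioms(1)[OF assms(1)]] by blast
qed

lemma set_add_left:
  assumes "ideal Y R" "X \<subseteq> carrier R"
  shows "X \<subseteq> set_add R X Y"
proof
  fix x assume x: "x \<in> X"
  have z: "\<zero> \<in> Y" using additive_subgroup.zero_closed[OF ideal.axioms(1)[OF assms(1)]] .
  have "x \<oplus> \<zero> \<in> set_add R X Y"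
    unfolding set_add_def' using x z by blast
  moreover have "x \<oplus> \<zero> = x" using x assms(2) by (intro r_zero) blast
  ultimately show "x \<in> set_add R X Y" by simp
qed

lemma set_add_mono:
  assumes "X \<subseteq> X'"
  shows "set_add R X Y \<subseteq> set_add R X' Y"
  using assms unfolding set_add_def' by blast

lemma Idl_Un:
  assumes "S \<subseteq> carrier R" "T \<subseteq> carrier R"
  shows "Idl (S \<union> T) = set_add R (Idl S) (Idl T)"
proof -
  have "set_add R (Idl S) (Idl T) = Idl (Idl S \<union> Idl T)"
    by (rule union_genideal[symmetric]) (use assms genideal_ideal in blast)+
  also have "\<dots> = Idl (S \<union> T)"
  proof
    have c0: "S \<union> T \<subseteq> carrier R" using assms by blast
    show "Idl (Idl S \<union> Idl T) \<subseteq> Idl (S \<union> T)"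
    proof (rule genideal_minimal)
      show "ideal (Idl (S \<union> T)) R" by (rule genideal_ideal[OF c0])
      show "Idl S \<union> Idl T \<subseteq> Idl (S \<union> T)"
        using subset_Idl_subset[OF c0, of S] subset_Idl_subset[OF c0, of T] by blast
    qed
    show "Idl (S \<union> T) \<subseteq> Idl (Idl S \<union> Idl T)"
    proof (rule genideal_minimal)
      have c: "Idl S \<union> Idl T \<subseteq> carrier R"
        using ideal.Icarr[OF genideal_ideal[OF assms(1)]] ideal.Icarr[OF genideal_ideal[OF assms(2)]] by blast
      show "ideal (Idl (Idl S \<union> Idl T)) R" by (rule genideal_ideal[OF c])
      show "S \<union> T \<subseteq> Idl (Idl S \<union> Idl T)"
        using genideal_self[OF c] genideal_self[OF assms(1)] genideal_self[OF assms(2)] by blast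
    qed
  qed
  finally show ?thesis by (rule sym)
qed

lemma pow_ideal: "ideal I R \<Longrightarrow> ideal (ideal_pow R I k) R"
  by (induct k) (auto simp: oneideal ideal_prod_is_ideal)

lemma one_prod: "ideal X R \<Longrightarrow> ideal_prod R (carrier R) X = X"
  by (simp add: ideal_prod_commute oneideal ideal_prod_one)

lemma pow_add:
  assumes "ideal I R"
  shows "ideal_pow R I (a + b) = ideal_prod R (ideal_pow R I a) (ideal_pow R I b)"
proof (induct a)
  case 0
  then show ?case using pow_ideal[OF assms, of b]
    by (simp add: one_prod)
next
  case (Suc a)
  then show ?case
    by (simp add: ideal_prod_assoc assms pow_ideal)
qed

lemma pow_mono: "I \<subseteq> J \<Longrightarrow> ideal_pow R I k \<subseteq> ideal_pow R J k"
  by (induct k) (simp_all add: ideal_prod_mono)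

lemma pow_elem:
  assumes "ideal I R" "x \<in> I"
  shows "x [^] k \<in> ideal_pow R I k"
proof (induct k)
  case 0
  then show ?case using assms by (simp add: ideal.Icarr)
next
  case (Suc k)
  have eq: "x [^] Suc k = x \<otimes> x [^] k"
    by (rule nat_pow_Suc2[OF ideal.Icarr[OF assms]])
  have "x \<otimes> x [^] k \<in> ideal_prod R I (ideal_pow R I k)"
    by (rule ideal_prod.prod[OF assms(2) Suc])
  then show ?case by (simp only: ideal_pow.simps eq)
qed

lemma red_rad:
  assumes "is_reduction R K L" "ideal L R"
  shows "ideal_radical R K = ideal_radical R L"
proof -
  from assms obtain m where K: "ideal K R" "K \<subseteq> L"
    and m: "ideal_pow R L (Suc m) = ideal_prod R K (ideal_pow R L m)"
    unfolding is_reduction_def by auto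
  show ?thesis
  proof
    show "ideal_radical R K \<subseteq> ideal_radical R L" by (rule rad_mono[OF K(2)])
    show "ideal_radical R L \<subseteq> ideal_radical R K"
    proof
      fix y assume "y \<in> ideal_radical R L"
      then obtain k :: nat where y: "y \<in> carrier R" "y [^] k \<in> L"
        unfolding ideal_radical_def by auto
      have "(y [^] k) [^] (Suc m) \<in> ideal_pow R L (Suc m)"
        by (rule pow_elem[OF assms(2) y(2)])
      also have "\<dots> \<subseteq> K" using m ideal_prod_inter[OF K(1) pow_ideal[OF assms(2)]] by auto
      finally have h: "(y [^] k) [^] (Suc m) \<in> K" .
      have "y [^] (k * Suc m) \<in> K" using h by (simp only: nat_pow_pow[OF y(1)])
      thus "y \<in> ideal_radical R K" using y(1) unfolding ideal_radical_def by blast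
    qed
  qed
qed

lemma red_trans:
  assumes "is_reduction R K J" "is_reduction R J L" "ideal L R"
  shows "is_reduction R K L"
proof -
  from assms(1) obtain s where K: "ideal K R" "K \<subseteq> J" "s > 0"
    and s: "ideal_pow R J (Suc s) = ideal_prod R K (ideal_pow R J s)"
    unfolding is_reduction_def by auto
  from assms(2) obtain r where J: "ideal J R" "J \<subseteq> L" "r > 0"
    and r: "ideal_pow R L (Suc r) = ideal_prod R J (ideal_pow R L r)"
    unfolding is_reduction_def by auto
  note L = assms(3)
  have key: "ideal_pow R L (r + k) = ideal_prod R (ideal_pow R J k) (ideal_pow R L r)" for k
  proof (induct k)
    case 0
    then show ?case by (simp add: one_prod pow_ideal L)
  next
    case (Suc k)
    have "ideal_pow R L (r + Suc k) = ideal_pow R L (Suc r + k)" by (simp only: add_Suc_right add_Suc)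
    also have "\<dots> = ideal_prod R (ideal_pow R L (Suc r)) (ideal_pow R L k)"
      by (rule pow_add[OF L])
    also have "\<dots> = ideal_prod R J (ideal_prod R (ideal_pow R L r) (ideal_pow R L k))"
      by (simp only: r ideal_prod_assoc[OF J(1) pow_ideal[OF L] pow_ideal[OF L]])
    also have "\<dots> = ideal_prod R J (ideal_pow R L (r + k))"
      by (simp only: pow_add[OF L])
    also have "\<dots> = ideal_pow R J (Suc k) \<cdot> ideal_pow R L r"
      by (simp only: Suc ideal_pow.simps(2) ideal_prod_assoc[OF J(1) pow_ideal[OF J(1)] pow_ideal[OF L]])
    finally show ?case .
  qed
  have "ideal_pow R L (Suc (r + s)) = ideal_pow R L (r + Suc s)" by (simp only: add_Suc_right)
  also have "\<dots> = ideal_prod R (ideal_prod R K (ideal_pow R J s)) (ideal_pow R L r)"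
    by (simp only: key[of "Suc s"] s)
  also have "\<dots> = ideal_prod R K (ideal_pow R L (r + s))"
    by (simp only: key[of s] ideal_prod_assoc[OF K(1) pow_ideal[OF J(1)] pow_ideal[OF L]])
  finally have eq: "ideal_pow R L (Suc (r + s)) = ideal_prod R K (ideal_pow R L (r + s))" .
  have pos: "r + s > 0" using \<open>r > 0\<close> by simp
  have KL: "K \<subseteq> L" using K(2) J(2) by blast
  show ?thesis unfolding is_reduction_def using K(1) KL eq pos by blast
qed

lemma red_sum:
  assumes "is_reduction R K L" "ideal L R" "ideal A R"
  shows "is_reduction R (set_add R K A) (set_add R L A)"
proof -
  from assms obtain r where K: "ideal K R" "K \<subseteq> L" "r > 0"
    and r: "ideal_pow R L (Suc r) = ideal_prod R K (ideal_pow R L r)"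
    unfolding is_reduction_def by auto
  define L' where "L' = set_add R L A"
  define K' where "K' = set_add R K A"
  have L': "ideal L' R" unfolding L'_def by (rule add_ideals[OF assms(2,3)])
  have K': "ideal K' R" unfolding K'_def by (rule add_ideals[OF K(1) assms(3)])
  have KK': "K' \<subseteq> L'" unfolding K'_def L'_def by (rule set_add_mono[OF K(2)])
  have LL': "L \<subseteq> L'" unfolding L'_def by (rule set_add_left[OF assms(3)]) (use ideal.Icarr[OF assms(2)] in blast)
  have Kc: "K \<subseteq> carrier R" using ideal.Icarr[OF K(1)] by blast
  have Ac: "A \<subseteq> carrier R" using ideal.Icarr[OF assms(3)] by blast
  have KsK': "K \<subseteq> K'" unfolding K'_def by (rule set_add_left[OF assms(3) Kc])
  have AK': "A \<subseteq> K'" unfolding K'_def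
    using set_add_left[OF K(1) Ac] set_add_comm[OF Kc Ac] by simp
  have T: "ideal (ideal_prod R K' (ideal_pow R L' r)) R"
    by (simp add: K' L' ideal_prod_is_ideal pow_ideal)
  have C: "\<forall>i. i + j = Suc r \<longrightarrow>
      ideal_prod R (ideal_pow R L i) (ideal_pow R L' j) \<subseteq> ideal_prod R K' (ideal_pow R L' r)" for j
  proof (induct j)
    case 0
    show ?case
    proof (intro allI impI)
      fix i assume "i + 0 = Suc r"
      then have i: "i = Suc r" by simp
      have "ideal_prod R (ideal_pow R L i) (ideal_pow R L' 0) = ideal_prod R K (ideal_pow R L r)"
        by (simp only: i ideal_pow.simps(1) ideal_prod_one[OF pow_ideal[OF assms(2)]] r ideal_prod_one[OF ideal_prod_is_ideal[OF K(1) pow_ideal[OF assms(2)]]])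
      also have "\<dots> \<subseteq> ideal_prod R K' (ideal_pow R L' r)"
        by (rule ideal_prod_mono[OF KsK' pow_mono[OF LL']])
      finally show "ideal_prod R (ideal_pow R L i) (ideal_pow R L' 0) \<subseteq> ideal_prod R K' (ideal_pow R L' r)" .
    qed
  next
    case (Suc j)
    show ?case
    proof (intro allI impI)
      fix i assume ij: "i + Suc j = Suc r"
      have Li: "ideal (ideal_pow R L i) R" by (simp add: pow_ideal assms(2))
      have Lj: "ideal (ideal_pow R L' j) R" by (simp add: pow_ideal L')
      have dis: "ideal_prod R L' (ideal_pow R L' j) = set_add R (ideal_prod R L (ideal_pow R L' j)) (ideal_prod R A (ideal_pow R L' j))"
        by (rule ideal_prod_distr(2)[OF Lj assms(2) assms(3), folded L'_def])
      have "ideal_prod R (ideal_pow R L i) (ideal_pow R L' (Suc j))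
          = ideal_prod R (ideal_pow R L i) (set_add R (ideal_prod R L (ideal_pow R L' j)) (ideal_prod R A (ideal_pow R L' j)))"
        by (simp only: ideal_pow.simps(2) dis)
      also have "\<dots> = set_add R (ideal_prod R (ideal_pow R L i) (ideal_prod R L (ideal_pow R L' j)))
                  (ideal_prod R (ideal_pow R L i) (ideal_prod R A (ideal_pow R L' j)))"
        by (rule ideal_prod_distr(1)[OF Li ideal_prod_is_ideal[OF assms(2) Lj] ideal_prod_is_ideal[OF assms(3) Lj]])
      also have "\<dots> \<subseteq> ideal_prod R K' (ideal_pow R L' r)"
      proof (rule set_add_sub[OF T])
        have "ideal_prod R (ideal_pow R L i) (ideal_prod R L (ideal_pow R L' j))
             = ideal_prod R (ideal_prod R (ideal_pow R L i) L) (ideal_pow R L' j)"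
          by (rule ideal_prod_assoc[OF Li assms(2) Lj, symmetric])
        also have "\<dots> = ideal_prod R (ideal_prod R L (ideal_pow R L i)) (ideal_pow R L' j)"
          by (simp only: ideal_prod_commute[OF Li assms(2)])
        also have "\<dots> = ideal_prod R (ideal_pow R L (Suc i)) (ideal_pow R L' j)"
          by (simp only: ideal_pow.simps(2))
        also have "\<dots> \<subseteq> ideal_prod R K' (ideal_pow R L' r)"
        proof -
          have "Suc i + j = Suc r" using ij by simp
          then show ?thesis using Suc by blast
        qed
        finally show "ideal_prod R (ideal_pow R L i) (ideal_prod R L (ideal_pow R L' j))
             \<subseteq> ideal_prod R K' (ideal_pow R L' r)" .
        have "ideal_prod R (ideal_pow R L i) (ideal_prod R A (ideal_pow R L' j))
             = ideal_prod R (ideal_prod R (ideal_pow R L i) A) (ideal_pow R L' j)"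
          by (rule ideal_prod_assoc[OF Li assms(3) Lj, symmetric])
        also have "\<dots> = ideal_prod R (ideal_prod R A (ideal_pow R L i)) (ideal_pow R L' j)"
          by (simp only: ideal_prod_commute[OF Li assms(3)])
        also have "\<dots> = ideal_prod R A (ideal_prod R (ideal_pow R L i) (ideal_pow R L' j))"
          by (rule ideal_prod_assoc[OF assms(3) Li Lj])
        also have "\<dots> \<subseteq> ideal_prod R A (ideal_prod R (ideal_pow R L' i) (ideal_pow R L' j))"
          by (intro ideal_prod_mono pow_mono LL' order_refl)
        also have "\<dots> = ideal_prod R A (ideal_pow R L' r)"
        proof -
          have "i + j = r" using ij by simp
          then show ?thesis by (simp only: pow_add[OF L', symmetric])
        qed
        also have "\<dots> \<subseteq> ideal_prod R K' (ideal_pow R L' r)"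
          by (intro ideal_prod_mono AK' order_refl)
        finally show "ideal_prod R (ideal_pow R L i) (ideal_prod R A (ideal_pow R L' j))
             \<subseteq> ideal_prod R K' (ideal_pow R L' r)" .
      qed
      finally show "ideal_prod R (ideal_pow R L i) (ideal_pow R L' (Suc j)) \<subseteq> ideal_prod R K' (ideal_pow R L' r)" .
    qed
  qed
  have "ideal_pow R L' (Suc r) = ideal_prod R (ideal_pow R L 0) (ideal_pow R L' (Suc r))"
    by (simp only: ideal_pow.simps(1) one_prod[OF pow_ideal[OF L']])
  also have "\<dots> \<subseteq> ideal_prod R K' (ideal_pow R L' r)"
  proof -
    have "0 + Suc r = Suc r" by simp
    then show ?thesis using C[of "Suc r"] by blast
  qed
  finally have sub: "ideal_pow R L' (Suc r) \<subseteq> ideal_prod R K' (ideal_pow R L' r)" .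
  have "ideal_prod R K' (ideal_pow R L' r) \<subseteq> ideal_prod R L' (ideal_pow R L' r)"
    by (rule ideal_prod_mono[OF KK' order_refl])
  then have "ideal_prod R K' (ideal_pow R L' r) \<subseteq> ideal_pow R L' (Suc r)"
    by (simp only: ideal_pow.simps(2))
  with sub have eq: "ideal_pow R L' (Suc r) = ideal_prod R K' (ideal_pow R L' r)" by blast
  show ?thesis unfolding is_reduction_def K'_def[symmetric] L'_def[symmetric]
    using K' KK' eq \<open>r > 0\<close> by blast
qed

end

theorem lemma2p3:
  fixes R :: "('a, 'b) ring_scheme" and I :: "'a set" and n :: nat
  assumes "cring R" and "noetherian_ring R"
    and "ideal I R" and "I \<noteq> carrier R"
    and "n \<ge> ara R I"
    and "\<forall>J. ideal J R \<and> n_generated R (Suc n) J \<and> J \<subseteq> I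
              \<and> ideal_radical R J = ideal_radical R I
              \<longrightarrow> (\<exists>K. n_generated R n K \<and> is_reduction R K J)"
  shows "\<exists>K. n_generated R n K \<and> is_reduction R K I"
proof -
  interpret cring R by fact
  interpret N: noetherian_ring R by fact
  have Icarr: "I \<subseteq> carrier R" using ideal.Icarr[OF assms(3)] by blast
  have zI: "\<zero>\<^bsub>R\<^esub> \<in> I" using assms(3) by (simp add: additive_subgroup.zero_closed ideal.axioms(1))
  obtain A where A: "A \<subseteq> carrier R" "finite A" "I = Idl\<^bsub>R\<^esub> A"
    using N.finetely_gen[OF assms(3)] by blast
  obtain gs where gs: "set gs = A" using finite_list[OF A(2)] by blast
  have AI: "A \<subseteq> I" using A genideal_self by auto
  define Pr where "Pr = (\<lambda>n. \<exists>xs. length xs = n \<and> set xs \<subseteq> I \<and>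
                 ideal_radical R (Idl\<^bsub>R\<^esub> (set xs)) = ideal_radical R I)"
  have "Pr (length gs)" unfolding Pr_def using gs A AI by auto
  then have "Pr (Least Pr)" by (rule LeastI)
  moreover have "Least Pr = ara R I" unfolding Pr_def ara_def by simp
  ultimately obtain xs0 where xs0: "length xs0 = ara R I" "set xs0 \<subseteq> I"
    "ideal_radical R (Idl\<^bsub>R\<^esub> (set xs0)) = ideal_radical R I"
    unfolding Pr_def by auto
  define xs where "xs = xs0 @ replicate (n - ara R I) \<zero>\<^bsub>R\<^esub>"
  have lxs: "length xs = n" using assms(5) xs0(1) unfolding xs_def by simp
  have xsI: "set xs \<subseteq> I" unfolding xs_def using xs0(2) zI by auto
  have xs0c: "set xs0 \<subseteq> carrier R" using xs0(2) Icarr by blast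
  have "Idl\<^bsub>R\<^esub> (set xs) = Idl\<^bsub>R\<^esub> (set xs0)"
  proof
    show "Idl\<^bsub>R\<^esub> (set xs0) \<subseteq> Idl\<^bsub>R\<^esub> (set xs)"
      by (rule subset_Idl_subset) (use xsI Icarr in \<open>auto simp: xs_def\<close>)
    have "\<zero>\<^bsub>R\<^esub> \<in> Idl\<^bsub>R\<^esub> (set xs0)"
      using genideal_ideal[OF xs0c] by (simp add: additive_subgroup.zero_closed ideal.axioms(1))
    then show "Idl\<^bsub>R\<^esub> (set xs) \<subseteq> Idl\<^bsub>R\<^esub> (set xs0)"
      using genideal_self[OF xs0c]
      by (intro genideal_minimal genideal_ideal xs0c) (auto simp: xs_def)
  qed
  then have radxs: "ideal_radical R (Idl\<^bsub>R\<^esub> (set xs)) = ideal_radical R I" using xs0(3) by simp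
  have xsc: "set xs \<subseteq> carrier R" using xsI Icarr by blast
  have main: "set bs \<subseteq> I \<Longrightarrow> \<exists>K. n_generated R n K \<and> is_reduction R K (Idl\<^bsub>R\<^esub> (set xs \<union> set bs))"
    for bs
  proof (induct bs)
    case Nil
    have "is_reduction R (Idl\<^bsub>R\<^esub> (set xs)) (Idl\<^bsub>R\<^esub> (set xs))"
      unfolding is_reduction_def
      using genideal_ideal[OF xsc] by (auto intro: exI[of _ "Suc 0"])
    then show ?case using lxs xsc unfolding n_generated_def by auto
  next
    case (Cons b bs)
    then have bI: "b \<in> I" and bsI: "set bs \<subseteq> I" by auto
    have bc: "b \<in> carrier R" using bI Icarr by blast
    define L where "L = Idl\<^bsub>R\<^esub> (set xs \<union> set bs)"
    have Lc: "set xs \<union> set bs \<subseteq> carrier R" using xsI bsI Icarr by blast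
    have Lid: "ideal L R" unfolding L_def by (rule genideal_ideal[OF Lc])
    have LI: "L \<subseteq> I" unfolding L_def by (rule genideal_minimal[OF assms(3)]) (use xsI bsI in blast)
    from Cons(1)[OF bsI] obtain K where K: "n_generated R n K" "is_reduction R K L"
      unfolding L_def by blast
    then obtain ys where ys: "length ys = n" "set ys \<subseteq> carrier R" "K = Idl\<^bsub>R\<^esub> (set ys)"
      unfolding n_generated_def by blast
    have KL: "K \<subseteq> L" using K(2) unfolding is_reduction_def by auto
    define J where "J = Idl\<^bsub>R\<^esub> (set (b # ys))"
    have Jc: "set (b # ys) \<subseteq> carrier R" using ys bc by auto
    have Jid: "ideal J R" unfolding J_def by (rule genideal_ideal[OF Jc])
    have JK: "J = set_add R K (Idl\<^bsub>R\<^esub> {b})"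
      unfolding J_def ys(3) using Idl_Un[OF ys(2), of "{b}"] bc by (simp add: Un_commute)
    have Jgen: "n_generated R (Suc n) J" unfolding n_generated_def J_def
      using ys Jc by (intro exI[of _ "b # ys"]) auto
    have KsJ: "set ys \<subseteq> I" using genideal_self[OF ys(2)] ys(3) KL LI by blast
    have JI: "J \<subseteq> I" unfolding J_def by (rule genideal_minimal[OF assms(3)]) (use KsJ bI in auto)
    have KJ: "K \<subseteq> J" unfolding J_def ys(3) by (rule subset_Idl_subset[OF Jc]) auto
    have "ideal_radical R I = ideal_radical R (Idl\<^bsub>R\<^esub> (set xs))" using radxs by simp
    also have "\<dots> \<subseteq> ideal_radical R L" unfolding L_def
      by (rule rad_mono, rule subset_Idl_subset[OF Lc]) auto
    also have "\<dots> = ideal_radical R K" using red_rad[OF K(2) Lid] by simp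
    also have "\<dots> \<subseteq> ideal_radical R J" by (rule rad_mono[OF KJ])
    finally have "ideal_radical R J = ideal_radical R I" using rad_mono[OF JI] by blast
    with assms(6) Jid Jgen JI obtain K2 where K2: "n_generated R n K2" "is_reduction R K2 J"
      by blast
    have bid: "ideal (Idl\<^bsub>R\<^esub> {b}) R" using bc by (simp add: genideal_ideal)
    have "is_reduction R J (set_add R L (Idl\<^bsub>R\<^esub> {b}))"
      unfolding JK by (rule red_sum[OF K(2) Lid bid])
    moreover have "set_add R L (Idl\<^bsub>R\<^esub> {b}) = Idl\<^bsub>R\<^esub> (set xs \<union> set (b # bs))"
      unfolding L_def using Idl_Un[OF Lc, of "{b}"] bc by (simp add: insert_commute)
    ultimately have "is_reduction R J (Idl\<^bsub>R\<^esub> (set xs \<union> set (b # bs)))" by simp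
    then have "is_reduction R K2 (Idl\<^bsub>R\<^esub> (set xs \<union> set (b # bs)))"
      using red_trans[OF K2(2)] Lc bc by (auto intro: genideal_ideal)
    then show ?case using K2(1) by blast
  qed
  have "Idl\<^bsub>R\<^esub> (set xs \<union> set gs) = I"
  proof
    show "Idl\<^bsub>R\<^esub> (set xs \<union> set gs) \<subseteq> I" by (rule genideal_minimal[OF assms(3)]) (use xsI AI gs in blast)
    show "I \<subseteq> Idl\<^bsub>R\<^esub> (set xs \<union> set gs)" unfolding A(3) using xsc A gs
      by (intro subset_Idl_subset) auto
  qed
  with main[of gs] AI gs show ?thesis by auto
qed

end
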